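(* Let $G$ be a directed acyclic graph on $[n]$ and $H\subseteq G$ a subgraph. Then $\tilde Q_H$ is a face of $\tilde Q_G$ if and only if the multigraph $H_{comp}$ is loopless and has no directed cycles.
   Context: Conventions: $G$ is a directed acyclic graph with vertex set $[n]$, every edge $(i,j)\in E(G)$ satisfying $i<j$. A subgraph $H\subseteq G$ means $V(H)=[n]$ and $E(H)\subseteq E(G)$; $H^{un}$ is the underlying undirected graph of $H$. $\tilde Q_G=\mathrm{conv}(\{\mathbf 0\}\cup\{\mathbf e_i-\mathbf e_j:(i,j)\in E(G)\})\subset\mathbb R^n$, similarly $\tilde Q_H$. The directed multigraph $H_{comp}$ has as vertices the connected components of $H^{un}$, and for each edge $(u,v)\in E(G)\setminus E(H)$ one edge from the component containing $u$ to the component containing $v$ (so $H_{comp}$ may have multiple edges, loops, and directed cycles). *)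

theory Defs
  imports "HOL-Analysis.Analysis"
begin

text \<open>Vertices of the graph are the elements of a finite linearly ordered type 'n
  (standing for [n] with its usual order); R^n is real^'n, e_i = axis i 1.
  A graph is given by its edge set, a set of ordered pairs of vertices.\<close>

definition is_dag_graph :: "('n::{finite,linorder} \<times> 'n) set \<Rightarrow> bool" where
  "is_dag_graph E \<longleftrightarrow> (\<forall>(i,j)\<in>E. i < j)"

definition Qtilde :: "('n::{finite,linorder} \<times> 'n) set \<Rightarrow> (real ^ ('n::{finite,linorder})) set" where
  "Qtilde E = convex hull (insert 0 {axis i (1::real) - axis j 1 | i j. (i,j) \<in> E})"

definition und_comp :: "('n \<times> 'n) set \<Rightarrow> 'n \<Rightarrow> 'n set" where
  "und_comp H u = {v. (u,v) \<in> (H \<union> H\<inverse>)\<^sup>*}"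

text \<open>Edge relation of the multigraph H_comp (multiplicities are irrelevant for
  looplessness and directed cycles).\<close>
definition comp_edges :: "('n \<times> 'n) set \<Rightarrow> ('n \<times> 'n) set \<Rightarrow> ('n set \<times> 'n set) set" where
  "comp_edges G H = {(und_comp H u, und_comp H v) | u v. (u,v) \<in> G - H}"

definition comp_loopless :: "('n \<times> 'n) set \<Rightarrow> ('n \<times> 'n) set \<Rightarrow> bool" where
  "comp_loopless G H \<longleftrightarrow> (\<forall>(a,b)\<in>comp_edges G H. a \<noteq> b)"

definition comp_no_dicycle :: "('n \<times> 'n) set \<Rightarrow> ('n \<times> 'n) set \<Rightarrow> bool" where
  "comp_no_dicycle G H \<longleftrightarrow> acyclic (comp_edges G H)"

end

theory Submission
  imports Defs
begin

lemma inner_gen: "(a::real^'n) \<bullet> (axis i 1 - axis j 1) = a$i - a$j"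
  by (simp add: inner_diff_right inner_axis)

lemma Qtilde_alt: "Qtilde E = convex hull (insert 0 ((\<lambda>(i,j). axis i (1::real) - axis j 1) ` E))"
proof -
  have "{axis i (1::real) - axis j 1 | i j. (i,j) \<in> E} = (\<lambda>(i,j). axis i (1::real) - axis j 1) ` E"
    by auto
  then show ?thesis unfolding Qtilde_def by simp
qed

lemma finite_gens:
  fixes E :: "('n::{finite,linorder} \<times> 'n) set"
  shows "finite (insert 0 ((\<lambda>(i,j). axis i (1::real) - axis j 1) ` E))"
  by simp

lemma comp_eq:
  assumes "(u,v) \<in> (H \<union> H\<inverse>)\<^sup>*"
  shows "und_comp H u = und_comp H v"
proof -
  have "(v,u) \<in> ((H \<union> H\<inverse>)\<inverse>)\<^sup>*" using assms by (rule rtrancl_converseI)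
  moreover have "(H \<union> H\<inverse>)\<inverse> = H \<union> H\<inverse>" by auto
  ultimately have vu: "(v,u) \<in> (H \<union> H\<inverse>)\<^sup>*" by simp
  show ?thesis unfolding und_comp_def
    using assms vu by (auto intro: rtrancl_trans)
qed

lemma not_in_QH:
  fixes G H :: "('n::{finite,linorder} \<times> 'n) set"
  assumes dag: "is_dag_graph G" and HG: "H \<subseteq> G" and ij: "(i,j) \<in> G - H"
  shows "axis i (1::real) - axis j 1 \<notin> Qtilde H"
proof
  define c where "c = axis i (1::real) - axis j 1"
  have ilj: "i < j" using dag ij unfolding is_dag_graph_def by auto
  have cv: "c $ k = (if k = i then 1 else 0) - (if k = j then 1 else 0)" for k
    unfolding c_def by (simp add: axis_def)
  have sub: "insert 0 ((\<lambda>(i,j). axis i (1::real) - axis j 1) ` H) \<subseteq> {x. c \<bullet> x \<le> 1}"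
  proof
    fix x assume "x \<in> insert 0 ((\<lambda>(i,j). axis i (1::real) - axis j 1) ` H)"
    then consider "x = 0" | k l where "(k,l) \<in> H" "x = axis k 1 - axis l 1" by auto
    then show "x \<in> {x. c \<bullet> x \<le> 1}"
    proof cases
      case 1 then show ?thesis by simp
    next
      case 2
      have kl: "k < l" using 2 HG dag unfolding is_dag_graph_def by auto
      have "(k,l) \<noteq> (i,j)" using 2 ij by auto
      then show ?thesis using 2 kl ilj by (auto simp: inner_gen cv)
    qed
  qed
  have "Qtilde H \<subseteq> {x. c \<bullet> x \<le> 1}"
    unfolding Qtilde_alt by (rule hull_minimal[OF sub]) (rule convex_halfspace_le)
  moreover assume "axis i (1::real) - axis j 1 \<in> Qtilde H"
  ultimately have "c \<bullet> c \<le> 1" unfolding c_def by auto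
  moreover have "c \<bullet> c = 2"
  proof -
    have "c \<bullet> (axis i 1 - axis j 1) = c$i - c$j" by (rule inner_gen)
    then have "c \<bullet> c = c$i - c$j" by (simp only: c_def[symmetric])
    then show ?thesis using ilj cv[of i] cv[of j] by simp
  qed
  ultimately show False by simp
qed

lemma trancl_w:
  fixes w :: "'n \<Rightarrow> real"
  assumes wH: "\<And>x y. (x,y) \<in> (H \<union> H\<inverse>)\<^sup>* \<Longrightarrow> w x = w y"
    and wGH: "\<And>u v. (u,v) \<in> G - H \<Longrightarrow> w u < w v"
    and XY: "(X,Y) \<in> (comp_edges G H)\<^sup>+"
  shows "(\<exists>x. x \<in> X) \<and> (\<forall>x\<in>X. \<forall>y\<in>Y. w x < w y)"
  using XY
proof (induction rule: trancl_induct)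
  case (base Y)
  then obtain u v where uv: "X = und_comp H u" "Y = und_comp H v" "(u,v) \<in> G - H"
    unfolding comp_edges_def by auto
  have "u \<in> X" using uv unfolding und_comp_def by auto
  moreover have "\<forall>x\<in>X. \<forall>y\<in>Y. w x < w y"
  proof (intro ballI)
    fix x y assume "x \<in> X" "y \<in> Y"
    then have "w u = w x" "w v = w y" using uv wH unfolding und_comp_def by auto
    then show "w x < w y" using wGH[OF uv(3)] by simp
  qed
  ultimately show ?case by blast
next
  case (step Y Z)
  then obtain u v where uv: "Y = und_comp H u" "Z = und_comp H v" "(u,v) \<in> G - H"
    unfolding comp_edges_def by auto
  have uY: "u \<in> Y" using uv unfolding und_comp_def by auto
  have "\<forall>y\<in>Y. \<forall>z\<in>Z. w y < w z"
  proof (intro ballI)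
    fix x y assume "x \<in> Y" "y \<in> Z"
    then have "w u = w x" "w v = w y" using uv wH unfolding und_comp_def by auto
    then show "w x < w y" using wGH[OF uv(3)] by simp
  qed
  then show ?case using step.IH uY by fastforce
qed

lemma w_comp:
  fixes w :: "'n \<Rightarrow> real"
  assumes wH: "\<And>x y. (x,y) \<in> H \<Longrightarrow> w x = w y"
  shows "(x,y) \<in> (H \<union> H\<inverse>)\<^sup>* \<Longrightarrow> w x = w y"
proof (induction rule: rtrancl_induct)
  case base then show ?case by simp
next
  case (step y z) then show ?case using wH by auto
qed

theorem mainTheorem5:
  fixes G H :: "('n::{finite,linorder} \<times> 'n) set"
  assumes "is_dag_graph G" and "H \<subseteq> G"
  shows "Qtilde H face_of Qtilde G \<longleftrightarrow> comp_loopless G H \<and> comp_no_dicycle G H"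
proof
  define SG where "SG = insert 0 ((\<lambda>(i,j). axis i (1::real) - axis j 1) ` G)"
  define SH where "SH = insert 0 ((\<lambda>(i,j). axis i (1::real) - axis j 1) ` H)"
  have QG: "Qtilde G = convex hull SG" unfolding SG_def by (rule Qtilde_alt)
  have QH: "Qtilde H = convex hull SH" unfolding SH_def by (rule Qtilde_alt)
  assume face: "Qtilde H face_of Qtilde G"
  have "polyhedron (Qtilde G)" unfolding QG SG_def
    by (rule polytope_imp_polyhedron, rule polytope_convex_hull, simp)
  then have "Qtilde H exposed_face_of Qtilde G" using face exposed_face_of_polyhedron by blast
  then obtain a b where ab: "Qtilde G \<subseteq> {x. a \<bullet> x \<le> b}" "Qtilde H = Qtilde G \<inter> {x. a \<bullet> x = b}"
    unfolding exposed_face_of_def by blast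
  have "0 \<in> Qtilde H" unfolding QH SH_def by (simp add: hull_inc)
  then have b0: "b = 0" using ab by auto
  have inG: "axis i (1::real) - axis j 1 \<in> Qtilde G" if "(i,j) \<in> G" for i j
    unfolding QG SG_def using that by (intro hull_inc) auto
  have inH: "axis i (1::real) - axis j 1 \<in> Qtilde H" if "(i,j) \<in> H" for i j
    unfolding QH SH_def using that by (intro hull_inc) auto
  define w where "w k = a $ k" for k
  have wH: "w x = w y" if "(x,y) \<in> H" for x y
    using inH[OF that] ab b0 by (auto simp: w_def inner_gen)
  have wGH: "w u < w v" if "(u,v) \<in> G - H" for u v
  proof -
    have "a \<bullet> (axis u (1::real) - axis v 1) \<le> 0" using inG[of u v] that ab b0 by auto
    moreover have "a \<bullet> (axis u (1::real) - axis v 1) \<noteq> 0"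
      using not_in_QH[OF assms that] inG[of u v] that ab b0 by auto
    ultimately show ?thesis by (simp add: w_def inner_gen)
  qed
  have noc: "(X,X) \<notin> (comp_edges G H)\<^sup>+" for X
  proof
    assume "(X,X) \<in> (comp_edges G H)\<^sup>+"
    from trancl_w[of H w G, OF w_comp[of H w, OF wH] wGH this] show False by fastforce
  qed
  show "comp_loopless G H \<and> comp_no_dicycle G H"
    unfolding comp_loopless_def comp_no_dicycle_def acyclic_def
    using noc by auto
next
  define SG where "SG = insert 0 ((\<lambda>(i,j). axis i (1::real) - axis j 1) ` G)"
  define SH where "SH = insert 0 ((\<lambda>(i,j). axis i (1::real) - axis j 1) ` H)"
  have QG: "Qtilde G = convex hull SG" unfolding SG_def by (rule Qtilde_alt)
  have QH: "Qtilde H = convex hull SH" unfolding SH_def by (rule Qtilde_alt)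
  assume "comp_loopless G H \<and> comp_no_dicycle G H"
  then have acyc: "acyclic (comp_edges G H)" unfolding comp_no_dicycle_def by simp
  define r where "r = comp_edges G H"
  define w where "w u = real (card {C. (C, und_comp H u) \<in> r\<^sup>+})" for u
  have wH: "w u = w v" if "(u,v) \<in> H" for u v
  proof -
    have "und_comp H u = und_comp H v" using that by (intro comp_eq) auto
    then show ?thesis unfolding w_def by simp
  qed
  have wGH: "w u < w v" if "(u,v) \<in> G - H" for u v
  proof -
    have e: "(und_comp H u, und_comp H v) \<in> r" unfolding r_def comp_edges_def using that by auto
    have "{C. (C, und_comp H u) \<in> r\<^sup>+} \<subset> {C. (C, und_comp H v) \<in> r\<^sup>+}"
    proof
      show "{C. (C, und_comp H u) \<in> r\<^sup>+} \<subseteq> {C. (C, und_comp H v) \<in> r\<^sup>+}"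
        using e by (auto intro: trancl_into_trancl)
      have "(und_comp H u, und_comp H u) \<notin> r\<^sup>+" using acyc unfolding r_def acyclic_def by auto
      moreover have "(und_comp H u, und_comp H v) \<in> r\<^sup>+" using e by auto
      ultimately show "{C. (C, und_comp H u) \<in> r\<^sup>+} \<noteq> {C. (C, und_comp H v) \<in> r\<^sup>+}" by blast
    qed
    then have "card {C. (C, und_comp H u) \<in> r\<^sup>+} < card {C. (C, und_comp H v) \<in> r\<^sup>+}"
      by (intro psubset_card_mono) auto
    then show ?thesis unfolding w_def by simp
  qed
  define a where "a = (\<chi> k. w k)"
  have ag: "a \<bullet> (axis i 1 - axis j 1) = w i - w j" for i j
    by (simp add: inner_gen a_def)
  have SGle: "SG \<subseteq> {x. a \<bullet> x \<le> 0}"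
  proof
    fix x assume "x \<in> SG"
    then consider "x = 0" | i j where "(i,j) \<in> G" "x = axis i 1 - axis j 1"
      unfolding SG_def by auto
    then show "x \<in> {x. a \<bullet> x \<le> 0}"
    proof cases
      case 1 then show ?thesis by simp
    next
      case 2 then show ?thesis using wH[of i j] wGH[of i j] by (cases "(i,j) \<in> H") (auto simp: ag)
    qed
  qed
  have le: "a \<bullet> x \<le> 0" if "x \<in> Qtilde G" for x
    using hull_minimal[OF SGle, of convex] convex_halfspace_le[of a 0] that QG by auto
  have F: "(Qtilde G \<inter> {x. a \<bullet> x = 0}) face_of Qtilde G"
    by (rule face_of_Int_supporting_hyperplane_le) (auto simp: QG convex_convex_hull le)
  have SHsub: "SH \<subseteq> SG" unfolding SH_def SG_def using assms(2) by auto
  have SHeq: "SH \<subseteq> {x. a \<bullet> x = 0}"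
    unfolding SH_def using wH by (auto simp: ag)
  have eq: "Qtilde G \<inter> {x. a \<bullet> x = 0} = Qtilde H"
  proof
    show "Qtilde H \<subseteq> Qtilde G \<inter> {x. a \<bullet> x = 0}"
      using hull_mono[OF SHsub] hull_minimal[OF SHeq, of convex] convex_hyperplane[of a 0] QG QH by auto
  next
    have cSG: "compact SG" unfolding SG_def by (intro finite_imp_compact) simp
    obtain S' where S': "S' \<subseteq> SG" "Qtilde G \<inter> {x. a \<bullet> x = 0} = convex hull S'"
      using face_of_convex_hull_subset[OF cSG, of "Qtilde G \<inter> {x. a \<bullet> x = 0}"] F QG by auto
    have "S' \<subseteq> SH"
    proof
      fix s assume s: "s \<in> S'"
      then have s0: "a \<bullet> s = 0" using S'(2) hull_subset[of S' convex] by blast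
      from s S'(1) consider "s = 0" | i j where "(i,j) \<in> G" "s = axis i 1 - axis j 1"
        unfolding SG_def by auto
      then show "s \<in> SH"
      proof cases
        case 1 then show ?thesis unfolding SH_def by simp
      next
        case 2
        show ?thesis
        proof (cases "(i,j) \<in> H")
          case True then show ?thesis using 2 unfolding SH_def by auto
        next
          case False then show ?thesis using wGH[of i j] 2 s0 by (auto simp: ag)
        qed
      qed
    qed
    then show "Qtilde G \<inter> {x. a \<bullet> x = 0} \<subseteq> Qtilde H"
      using S'(2) QH hull_mono by metis
  qed
  show "Qtilde H face_of Qtilde G" using F eq by simp
qed

end
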